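(* Let $v$ be a quadratic vector field on $\mathbb{C}^2$ having four distinct non-degenerate singular points $p_1,p_2,p_3,p_4$. Then the position $p_4$ and the pair $(\operatorname{tr}Dv(p_4),\det Dv(p_4))$ are uniquely determined by the positions $p_1,p_2,p_3$ together with the pairs $(\operatorname{tr}Dv(p_k),\det Dv(p_k))$ for $k=1,2,3$. In particular, if two such quadratic vector fields share three singular points, with the same trace and determinant of the linearization at each of them, then they share the fourth singular point, with the same trace and determinant there as well.
   Context: A quadratic vector field is $v=P\,\partial_x+Q\,\partial_y$ with $P,Q\in\mathbb{C}[x,y]$ of degree at most $2$. $Dv$ denotes the Jacobian matrix of $(P,Q)$. A singular point $p$ is a common zero of $P,Q$, and it is non-degenerate if $\det Dv(p)\ne0$. *)

theory Defs
  imports "HOL-Analysis.Analysis"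
begin

record qpoly =
  c00 :: complex
  c10 :: complex
  c01 :: complex
  c20 :: complex
  c11 :: complex
  c02 :: complex

definition qeval :: "qpoly \<Rightarrow> complex \<Rightarrow> complex \<Rightarrow> complex" where
  "qeval p x y = c00 p + c10 p * x + c01 p * y + c20 p * x^2 + c11 p * x * y + c02 p * y^2"

definition qdx :: "qpoly \<Rightarrow> complex \<Rightarrow> complex \<Rightarrow> complex" where
  "qdx p x y = c10 p + 2 * c20 p * x + c11 p * y"

definition qdy :: "qpoly \<Rightarrow> complex \<Rightarrow> complex \<Rightarrow> complex" where
  "qdy p x y = c01 p + c11 p * x + 2 * c02 p * y"

text \<open>A quadratic vector field v = P d/dx + Q d/dy is the pair (P, Q).\<close>
type_synonym qvf = "qpoly \<times> qpoly"

definition singular_point :: "qvf \<Rightarrow> complex \<times> complex \<Rightarrow> bool" where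
  "singular_point v p \<longleftrightarrow> qeval (fst v) (fst p) (snd p) = 0 \<and> qeval (snd v) (fst p) (snd p) = 0"

definition Dv :: "qvf \<Rightarrow> complex \<times> complex \<Rightarrow> complex^2^2" where
  "Dv v p = vector [vector [qdx (fst v) (fst p) (snd p), qdy (fst v) (fst p) (snd p)],
                    vector [qdx (snd v) (fst p) (snd p), qdy (snd v) (fst p) (snd p)]]"

definition nondeg_singular_point :: "qvf \<Rightarrow> complex \<times> complex \<Rightarrow> bool" where
  "nondeg_singular_point v p \<longleftrightarrow> singular_point v p \<and> det (Dv v p) \<noteq> 0"

end

theory Submission
  imports Defs
begin

definition br :: "complex \<Rightarrow> complex \<Rightarrow> complex \<Rightarrow> complex \<Rightarrow> complex \<Rightarrow> complex \<Rightarrow> complex" where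
 "br x1 y1 x2 y2 x3 y3 = (x2-x1)*(y3-y1) - (y2-y1)*(x3-x1)"
definition lsum :: "(complex \<Rightarrow> complex \<Rightarrow> complex) \<Rightarrow> complex \<Rightarrow> complex \<Rightarrow> complex \<Rightarrow> complex \<Rightarrow> complex \<Rightarrow> complex \<Rightarrow> complex \<Rightarrow> complex \<Rightarrow> complex" where
 "lsum f x1 y1 x2 y2 x3 y3 x4 y4 = br x2 y2 x3 y3 x4 y4 * f x1 y1 - br x1 y1 x3 y3 x4 y4 * f x2 y2
   + br x1 y1 x2 y2 x4 y4 * f x3 y3 - br x1 y1 x2 y2 x3 y3 * f x4 y4"
definition nv1 :: "complex \<Rightarrow> complex \<Rightarrow> complex \<Rightarrow> complex \<Rightarrow> complex" where "nv1 u1 u2 w1 w2 = u1*u2*w2^2 - u2^2*w1*w2"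
definition nv2 :: "complex \<Rightarrow> complex \<Rightarrow> complex \<Rightarrow> complex \<Rightarrow> complex" where "nv2 u1 u2 w1 w2 = u2^2*w1^2 - u1^2*w2^2"
definition nv3 :: "complex \<Rightarrow> complex \<Rightarrow> complex \<Rightarrow> complex \<Rightarrow> complex" where "nv3 u1 u2 w1 w2 = u1^2*w1*w2 - u1*u2*w1^2"
definition qf :: "qpoly \<Rightarrow> complex \<Rightarrow> complex \<Rightarrow> complex" where
 "qf P u1 u2 = c20 P * u1^2 + c11 P * u1 * u2 + c02 P * u2^2"
definition JJ :: "qpoly \<Rightarrow> qpoly \<Rightarrow> complex \<Rightarrow> complex \<Rightarrow> complex" where
 "JJ P Q x y = qdx P x y * qdy Q x y - qdy P x y * qdx Q x y"
definition cc1 :: "qpoly \<Rightarrow> qpoly \<Rightarrow> complex" where "cc1 P Q = c11 P * c02 Q - c02 P * c11 Q"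
definition cc2 :: "qpoly \<Rightarrow> qpoly \<Rightarrow> complex" where "cc2 P Q = c02 P * c20 Q - c20 P * c02 Q"
definition cc3 :: "qpoly \<Rightarrow> qpoly \<Rightarrow> complex" where "cc3 P Q = c20 P * c11 Q - c11 P * c20 Q"

lemma det_Dv: "det (Dv v p) = JJ (fst v) (snd v) (fst p) (snd p)"
  by (simp add: Dv_def det_2 JJ_def)

lemma tr_Dv: "trace (Dv v p) = qdx (fst v) (fst p) (snd p) + qdy (snd v) (fst p) (snd p)"
  by (simp add: Dv_def trace_def sum_2)

lemma cr0: "lsum (\<lambda>x y. 1) x1 y1 x2 y2 x3 y3 x4 y4 = 0"
  "lsum (\<lambda>x y. x) x1 y1 x2 y2 x3 y3 x4 y4 = 0"
  "lsum (\<lambda>x y. y) x1 y1 x2 y2 x3 y3 x4 y4 = 0"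
  by (simp_all add: lsum_def br_def algebra_simps)

lemma lsum_g: "lsum (\<lambda>x y. a + b*x + c*y) x1 y1 x2 y2 x3 y3 x4 y4 = 0"
  using cr0[of x1 y1 x2 y2 x3 y3 x4 y4] unfolding lsum_def by algebra

lemma lsum_q: "lsum (qeval P) x1 y1 x2 y2 x3 y3 x4 y4 =
   c20 P * lsum (\<lambda>x y. x^2) x1 y1 x2 y2 x3 y3 x4 y4
 + c11 P * lsum (\<lambda>x y. x*y) x1 y1 x2 y2 x3 y3 x4 y4
 + c02 P * lsum (\<lambda>x y. y^2) x1 y1 x2 y2 x3 y3 x4 y4"
  using cr0[of x1 y1 x2 y2 x3 y3 x4 y4] unfolding lsum_def qeval_def by algebra

lemma taylor: "qeval P xi yi = qeval P xk yk + (qdx P xk yk*(xi-xk) + qdy P xk yk*(yi-yk)) + qf P (xi-xk) (yi-yk)"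
  unfolding qeval_def qdx_def qdy_def qf_def by algebra

lemma grad_u: assumes "qeval P xi yi = 0" "qeval P xk yk = 0"
  shows "qdx P xk yk*(xi-xk) + qdy P xk yk*(yi-yk) = - qf P (xi-xk) (yi-yk)"
  using taylor[of P xi yi xk yk] assms by (simp add: eq_neg_iff_add_eq_0)

lemma col_aux:
  fixes g1 g2 a1 a2 a3 u1 u2 w1 w2 :: complex
  assumes h1: "g1*u1 + g2*u2 = -(a1*u1^2 + a2*u1*u2 + a3*u2^2)"
    and h2: "g1*w1 + g2*w2 = -(a1*w1^2 + a2*w1*w2 + a3*w2^2)"
    and c: "u1*w2 - u2*w1 = 0" and u: "\<not>(u1=0 \<and> u2=0)" and w: "\<not>(w1=0 \<and> w2=0)"
    and uw: "\<not>(u1=w1 \<and> u2=w2)"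
  shows "g1*u1+g2*u2 = 0"
proof -
  obtain t where t1: "w1 = t*u1" and t2: "w2 = t*u2"
  proof (cases "u1 = 0")
    case True
    then have "u2 \<noteq> 0" using u by auto
    moreover have "w1 = 0" using c True \<open>u2 \<noteq> 0\<close> by simp
    ultimately show ?thesis using that[of "w2/u2"] True by auto
  next
    case False
    have "w2 = (w1/u1)*u2" using c False by (simp add: field_simps)
    then show ?thesis using that[of "w1/u1"] False by auto
  qed
  have t0: "t \<noteq> 0" using w t1 t2 by auto
  have t1': "t \<noteq> 1" using uw t1 t2 by auto
  define A where "A = a1*u1^2 + a2*u1*u2 + a3*u2^2"
  have "t*(g1*u1 + g2*u2) = -(t^2*A)" using h2 unfolding t1 t2 A_def by algebra
  with h1 have "t*(-A) = -(t^2*A)" unfolding A_def by simp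
  then have "A*t*(t-1) = 0" by algebra
  with t0 t1' have "A = 0" by auto
  with h1 show ?thesis unfolding A_def by simp
qed

lemma noncol:
  assumes "qeval P xk yk = 0" "qeval P xi yi = 0" "qeval P xj yj = 0"
    "qeval Q xk yk = 0" "qeval Q xi yi = 0" "qeval Q xj yj = 0"
    "(xk,yk) \<noteq> (xi,yi)" "(xk,yk) \<noteq> (xj,yj)" "(xi,yi) \<noteq> (xj,yj)"
    "JJ P Q xk yk \<noteq> 0"
  shows "br xk yk xi yi xj yj \<noteq> 0"
proof
  assume b: "br xk yk xi yi xj yj = 0"
  define u1 u2 w1 w2 where "u1 = xi-xk" "u2 = yi-yk" "w1 = xj-xk" "w2 = yj-yk"
  have c: "u1*w2 - u2*w1 = 0" using b unfolding br_def u1_u2_w1_w2_def by simp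
  have u: "\<not>(u1=0 \<and> u2=0)" "\<not>(w1=0 \<and> w2=0)" "\<not>(u1=w1 \<and> u2=w2)"
    using assms(7-9) unfolding u1_u2_w1_w2_def by auto
  have p1: "qdx P xk yk*u1 + qdy P xk yk*u2 = -(c20 P*u1^2 + c11 P*u1*u2 + c02 P*u2^2)"
    using grad_u[OF assms(2,1)] unfolding u1_u2_w1_w2_def qf_def by simp
  have p2: "qdx P xk yk*w1 + qdy P xk yk*w2 = -(c20 P*w1^2 + c11 P*w1*w2 + c02 P*w2^2)"
    using grad_u[OF assms(3,1)] unfolding u1_u2_w1_w2_def qf_def by simp
  have q1: "qdx Q xk yk*u1 + qdy Q xk yk*u2 = -(c20 Q*u1^2 + c11 Q*u1*u2 + c02 Q*u2^2)"
    using grad_u[OF assms(5,4)] unfolding u1_u2_w1_w2_def qf_def by simp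
  have q2: "qdx Q xk yk*w1 + qdy Q xk yk*w2 = -(c20 Q*w1^2 + c11 Q*w1*w2 + c02 Q*w2^2)"
    using grad_u[OF assms(6,4)] unfolding u1_u2_w1_w2_def qf_def by simp
  have gP: "qdx P xk yk*u1 + qdy P xk yk*u2 = 0" by (rule col_aux[OF p1 p2 c u])
  have gQ: "qdx Q xk yk*u1 + qdy Q xk yk*u2 = 0" by (rule col_aux[OF q1 q2 c u])
  have "u1 * JJ P Q xk yk = qdy Q xk yk*(qdx P xk yk*u1 + qdy P xk yk*u2) - qdy P xk yk*(qdx Q xk yk*u1 + qdy Q xk yk*u2)"
    unfolding JJ_def by algebra
  moreover have "u2 * JJ P Q xk yk = qdx P xk yk*(qdx Q xk yk*u1 + qdy Q xk yk*u2) - qdx Q xk yk*(qdx P xk yk*u1 + qdy P xk yk*u2)"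
    unfolding JJ_def by algebra
  ultimately show False using gP gQ u(1) assms(10) by auto
qed

lemma nn:
  assumes "qeval P xk yk = 0" "qeval P xi yi = 0" "qeval P xj yj = 0"
    "qeval Q xk yk = 0" "qeval Q xi yi = 0" "qeval Q xj yj = 0"
  shows "br xk yk xi yi xj yj * JJ P Q xk yk =
    cc1 P Q * nv1 (xi-xk) (yi-yk) (xj-xk) (yj-yk) + cc2 P Q * nv2 (xi-xk) (yi-yk) (xj-xk) (yj-yk)
  + cc3 P Q * nv3 (xi-xk) (yi-yk) (xj-xk) (yj-yk)"
proof -
  have "br xk yk xi yi xj yj * JJ P Q xk yk =
     (qdx P xk yk*(xi-xk) + qdy P xk yk*(yi-yk)) * (qdx Q xk yk*(xj-xk) + qdy Q xk yk*(yj-yk))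
   - (qdx Q xk yk*(xi-xk) + qdy Q xk yk*(yi-yk)) * (qdx P xk yk*(xj-xk) + qdy P xk yk*(yj-yk))"
    unfolding br_def JJ_def by algebra
  also have "\<dots> = qf P (xi-xk) (yi-yk) * qf Q (xj-xk) (yj-yk) - qf Q (xi-xk) (yi-yk) * qf P (xj-xk) (yj-yk)"
    using grad_u[OF assms(2,1)] grad_u[OF assms(3,1)] grad_u[OF assms(5,4)] grad_u[OF assms(6,4)]
    by simp
  also have "\<dots> = cc1 P Q * nv1 (xi-xk) (yi-yk) (xj-xk) (yj-yk) + cc2 P Q * nv2 (xi-xk) (yi-yk) (xj-xk) (yj-yk)
  + cc3 P Q * nv3 (xi-xk) (yi-yk) (xj-xk) (yj-yk)"
    unfolding qf_def cc1_def cc2_def cc3_def nv1_def nv2_def nv3_def by algebra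
  finally show ?thesis .
qed


lemma combine:
  fixes C1 C2 C3 l1 l2 l3 n1 n2 n3 D J R :: complex
  assumes "C1*l2 = C2*l1" "C1*l3 = C3*l1" "C2*l3 = C3*l2"
    "D*J = C1*n1 + C2*n2 + C3*n3" "l1*n1 + l2*n2 + l3*n3 = D*R" "D \<noteq> 0"
  shows "J*l1 = C1*R" "J*l2 = C2*R" "J*l3 = C3*R"
proof -
  have "D*(J*l1) = D*(C1*R)" "D*(J*l2) = D*(C2*R)" "D*(J*l3) = D*(C3*R)"
    using assms(1-5) by algebra+
  then show "J*l1 = C1*R" "J*l2 = C2*R" "J*l3 = C3*R" using assms(6) by auto
qed

lemma EJ:
  fixes P Q :: qpoly and x1 y1 x2 y2 x3 y3 x4 y4 a b c :: complex
  assumes z: "qeval P x1 y1 = 0" "qeval P x2 y2 = 0" "qeval P x3 y3 = 0" "qeval P x4 y4 = 0"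
    "qeval Q x1 y1 = 0" "qeval Q x2 y2 = 0" "qeval Q x3 y3 = 0" "qeval Q x4 y4 = 0"
  and d: "(x1,y1) \<noteq> (x2,y2)" "(x1,y1) \<noteq> (x3,y3)" "(x1,y1) \<noteq> (x4,y4)"
    "(x2,y2) \<noteq> (x3,y3)" "(x2,y2) \<noteq> (x4,y4)" "(x3,y3) \<noteq> (x4,y4)"
  and nz: "JJ P Q x1 y1 \<noteq> 0" "JJ P Q x2 y2 \<noteq> 0" "JJ P Q x3 y3 \<noteq> 0" "JJ P Q x4 y4 \<noteq> 0"
  shows "(a+b*x1+c*y1)/JJ P Q x1 y1 + (a+b*x2+c*y2)/JJ P Q x2 y2
       + (a+b*x3+c*y3)/JJ P Q x3 y3 + (a+b*x4+c*y4)/JJ P Q x4 y4 = 0"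
proof -
  define D1 D2 D3 D4 where "D1 = br x2 y2 x3 y3 x4 y4" "D2 = br x1 y1 x3 y3 x4 y4"
    "D3 = br x1 y1 x2 y2 x4 y4" "D4 = br x1 y1 x2 y2 x3 y3"
  have nD1: "D1 \<noteq> 0" unfolding D1_D2_D3_D4_def
    by (rule noncol[OF z(2,3,4,6,7,8) d(4,5,6) nz(2)])
  have nD2: "D2 \<noteq> 0" unfolding D1_D2_D3_D4_def
    by (rule noncol[OF z(1,3,4,5,7,8) d(2,3,6) nz(1)])
  have nD3: "D3 \<noteq> 0" unfolding D1_D2_D3_D4_def
    by (rule noncol[OF z(1,2,4,5,6,8) d(1,3,5) nz(1)])
  have nD4: "D4 \<noteq> 0" unfolding D1_D2_D3_D4_def
    by (rule noncol[OF z(1,2,3,5,6,7) d(1,2,4) nz(1)])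
  have e2: "br x2 y2 x1 y1 x3 y3 = - D4" unfolding D1_D2_D3_D4_def br_def by algebra
  have e3: "br x3 y3 x1 y1 x2 y2 = D4" unfolding D1_D2_D3_D4_def br_def by algebra
  have e4: "br x4 y4 x1 y1 x2 y2 = D3" unfolding D1_D2_D3_D4_def br_def by algebra
  define l1 l2 l3 where "l1 = lsum (\<lambda>x y. x^2) x1 y1 x2 y2 x3 y3 x4 y4"
    "l2 = lsum (\<lambda>x y. x*y) x1 y1 x2 y2 x3 y3 x4 y4" "l3 = lsum (\<lambda>x y. y^2) x1 y1 x2 y2 x3 y3 x4 y4"
  define C1 C2 C3 where "C1 = cc1 P Q" "C2 = cc2 P Q" "C3 = cc3 P Q"
  have oP: "c20 P * l1 + c11 P * l2 + c02 P * l3 = 0"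
    using lsum_q[of P x1 y1 x2 y2 x3 y3 x4 y4] z unfolding l1_l2_l3_def by (simp add: lsum_def)
  have oQ: "c20 Q * l1 + c11 Q * l2 + c02 Q * l3 = 0"
    using lsum_q[of Q x1 y1 x2 y2 x3 y3 x4 y4] z unfolding l1_l2_l3_def by (simp add: lsum_def)
  have cr: "C1*l2 = C2*l1" "C1*l3 = C3*l1" "C2*l3 = C3*l2"
    using oP oQ unfolding C1_C2_C3_def cc1_def cc2_def cc3_def by algebra+
  have G1: "l1 * nv1 (x2-x1) (y2-y1) (x3-x1) (y3-y1) + l2 * nv2 (x2-x1) (y2-y1) (x3-x1) (y3-y1)
     + l3 * nv3 (x2-x1) (y2-y1) (x3-x1) (y3-y1) = br x1 y1 x2 y2 x3 y3 * (-(D2*D3*D4))"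
    unfolding l1_l2_l3_def D1_D2_D3_D4_def lsum_def br_def nv1_def nv2_def nv3_def by algebra
  have G2: "l1 * nv1 (x1-x2) (y1-y2) (x3-x2) (y3-y2) + l2 * nv2 (x1-x2) (y1-y2) (x3-x2) (y3-y2)
     + l3 * nv3 (x1-x2) (y1-y2) (x3-x2) (y3-y2) = br x2 y2 x1 y1 x3 y3 * (D1*D3*D4)"
    unfolding l1_l2_l3_def D1_D2_D3_D4_def lsum_def br_def nv1_def nv2_def nv3_def by algebra
  have G3: "l1 * nv1 (x1-x3) (y1-y3) (x2-x3) (y2-y3) + l2 * nv2 (x1-x3) (y1-y3) (x2-x3) (y2-y3)
     + l3 * nv3 (x1-x3) (y1-y3) (x2-x3) (y2-y3) = br x3 y3 x1 y1 x2 y2 * (-(D1*D2*D4))"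
    unfolding l1_l2_l3_def D1_D2_D3_D4_def lsum_def br_def nv1_def nv2_def nv3_def by algebra
  have G4: "l1 * nv1 (x1-x4) (y1-y4) (x2-x4) (y2-y4) + l2 * nv2 (x1-x4) (y1-y4) (x2-x4) (y2-y4)
     + l3 * nv3 (x1-x4) (y1-y4) (x2-x4) (y2-y4) = br x4 y4 x1 y1 x2 y2 * (D1*D2*D3)"
    unfolding l1_l2_l3_def D1_D2_D3_D4_def lsum_def br_def nv1_def nv2_def nv3_def by algebra
  note N1 = nn[OF z(1,2,3,5,6,7), folded C1_C2_C3_def]
  note N2 = nn[OF z(2,1,3,6,5,7), folded C1_C2_C3_def]
  note N3 = nn[OF z(3,1,2,7,5,6), folded C1_C2_C3_def]
  note N4 = nn[OF z(4,1,2,8,5,6), folded C1_C2_C3_def]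
  have b1: "br x1 y1 x2 y2 x3 y3 \<noteq> 0" using nD4 unfolding D1_D2_D3_D4_def .
  have b2: "br x2 y2 x1 y1 x3 y3 \<noteq> 0" using nD4 e2 by simp
  have b3: "br x3 y3 x1 y1 x2 y2 \<noteq> 0" using nD4 e3 by simp
  have b4: "br x4 y4 x1 y1 x2 y2 \<noteq> 0" using nD3 e4 by simp
  note K1 = combine[OF cr N1 G1 b1]
  note K2 = combine[OF cr N2 G2 b2]
  note K3 = combine[OF cr N3 G3 b3]
  note K4 = combine[OF cr N4 G4 b4]
  define R1 R2 R3 R4 where "R1 = -(D2*D3*D4)" "R2 = D1*D3*D4" "R3 = -(D1*D2*D4)" "R4 = D1*D2*D3"
  have nR: "R1 \<noteq> 0" "R2 \<noteq> 0" "R3 \<noteq> 0" "R4 \<noteq> 0" unfolding R1_R2_R3_R4_def using nD1 nD2 nD3 nD4 by auto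
  have Cnz: "\<not>(C1 = 0 \<and> C2 = 0 \<and> C3 = 0)"
    using N1 b1 nz(1) by auto
  obtain L K where K: "K \<noteq> 0" and L1: "JJ P Q x1 y1 * L = K * R1" and L2: "JJ P Q x2 y2 * L = K * R2"
    and L3: "JJ P Q x3 y3 * L = K * R3" and L4: "JJ P Q x4 y4 * L = K * R4"
  proof -
    consider "C1 \<noteq> 0" | "C2 \<noteq> 0" | "C3 \<noteq> 0" using Cnz by blast
    then show ?thesis
    proof cases
      case 1 then show ?thesis using that[of C1 l1] K1 K2 K3 K4 unfolding R1_R2_R3_R4_def by auto
    next
      case 2 then show ?thesis using that[of C2 l2] K1 K2 K3 K4 unfolding R1_R2_R3_R4_def by auto
    next
      case 3 then show ?thesis using that[of C3 l3] K1 K2 K3 K4 unfolding R1_R2_R3_R4_def by auto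
    qed
  qed
  have Lnz: "L \<noteq> 0" using L1 K nR(1) by auto
  have J: "JJ P Q x1 y1 = K*R1/L" "JJ P Q x2 y2 = K*R2/L" "JJ P Q x3 y3 = K*R3/L" "JJ P Q x4 y4 = K*R4/L"
    using L1 L2 L3 L4 Lnz by (simp_all add: eq_divide_eq)
  have "lsum (\<lambda>x y. a + b*x + c*y) x1 y1 x2 y2 x3 y3 x4 y4 = 0" by (rule lsum_g)
  then have S: "D1*(a+b*x1+c*y1) - D2*(a+b*x2+c*y2) + D3*(a+b*x3+c*y3) - D4*(a+b*x4+c*y4) = 0"
    unfolding lsum_def D1_D2_D3_D4_def by simp
  have "(a+b*x1+c*y1)/JJ P Q x1 y1 + (a+b*x2+c*y2)/JJ P Q x2 y2
       + (a+b*x3+c*y3)/JJ P Q x3 y3 + (a+b*x4+c*y4)/JJ P Q x4 y4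
     = - (L/(K*D1*D2*D3*D4)) * (D1*(a+b*x1+c*y1) - D2*(a+b*x2+c*y2) + D3*(a+b*x3+c*y3) - D4*(a+b*x4+c*y4))"
    unfolding J R1_R2_R3_R4_def using K Lnz nD1 nD2 nD3 nD4
    by (simp add: field_simps)
  then show ?thesis using S by simp
qed


lemma tr_aff: "qdx P x y + qdy Q x y = (c10 P + c01 Q) + (2*c20 P + c11 Q)*x + (c11 P + 2*c02 Q)*y"
  by (simp add: qdx_def qdy_def algebra_simps)

lemma EJ4:
  fixes P Q :: qpoly and x1 y1 x2 y2 x3 y3 x4 y4 a b c :: complex
  assumes z: "qeval P x1 y1 = 0" "qeval P x2 y2 = 0" "qeval P x3 y3 = 0" "qeval P x4 y4 = 0"
    "qeval Q x1 y1 = 0" "qeval Q x2 y2 = 0" "qeval Q x3 y3 = 0" "qeval Q x4 y4 = 0"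
  and d: "(x1,y1) \<noteq> (x2,y2)" "(x1,y1) \<noteq> (x3,y3)" "(x1,y1) \<noteq> (x4,y4)"
    "(x2,y2) \<noteq> (x3,y3)" "(x2,y2) \<noteq> (x4,y4)" "(x3,y3) \<noteq> (x4,y4)"
  and nz: "JJ P Q x1 y1 \<noteq> 0" "JJ P Q x2 y2 \<noteq> 0" "JJ P Q x3 y3 \<noteq> 0" "JJ P Q x4 y4 \<noteq> 0"
  shows "(a+b*x4+c*y4)/JJ P Q x4 y4 = -((a+b*x1+c*y1)/JJ P Q x1 y1 + (a+b*x2+c*y2)/JJ P Q x2 y2
       + (a+b*x3+c*y3)/JJ P Q x3 y3)"
  using EJ[OF z d nz, of a b c] by (simp add: eq_neg_iff_add_eq_0 algebra_simps)

theorem lemma4p1: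
  fixes v w :: qvf and p1 p2 p3 p4 q4 :: "complex \<times> complex"
  assumes "distinct [p1, p2, p3, p4]"
    and "\<forall>p \<in> {p1, p2, p3, p4}. nondeg_singular_point v p"
    and "distinct [p1, p2, p3, q4]"
    and "\<forall>p \<in> {p1, p2, p3, q4}. nondeg_singular_point w p"
    and "\<forall>p \<in> {p1, p2, p3}. trace (Dv v p) = trace (Dv w p) \<and> det (Dv v p) = det (Dv w p)"
  shows "q4 = p4 \<and> trace (Dv w q4) = trace (Dv v p4) \<and> det (Dv w q4) = det (Dv v p4)"
proof -
  obtain P Q where v: "v = (P,Q)" by (cases v)
  obtain P' Q' where w: "w = (P',Q')" by (cases w)
  obtain x1 y1 where p1: "p1 = (x1,y1)" by (cases p1)
  obtain x2 y2 where p2: "p2 = (x2,y2)" by (cases p2)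
  obtain x3 y3 where p3: "p3 = (x3,y3)" by (cases p3)
  obtain x4 y4 where p4: "p4 = (x4,y4)" by (cases p4)
  obtain x5 y5 where q4: "q4 = (x5,y5)" by (cases q4)
  note defs = nondeg_singular_point_def singular_point_def det_Dv v w p1 p2 p3 p4 q4
  have zv: "qeval P x1 y1 = 0" "qeval P x2 y2 = 0" "qeval P x3 y3 = 0" "qeval P x4 y4 = 0"
    "qeval Q x1 y1 = 0" "qeval Q x2 y2 = 0" "qeval Q x3 y3 = 0" "qeval Q x4 y4 = 0"
    and nzv: "JJ P Q x1 y1 \<noteq> 0" "JJ P Q x2 y2 \<noteq> 0" "JJ P Q x3 y3 \<noteq> 0" "JJ P Q x4 y4 \<noteq> 0"
    using assms(2) unfolding defs by auto
  have zw: "qeval P' x1 y1 = 0" "qeval P' x2 y2 = 0" "qeval P' x3 y3 = 0" "qeval P' x5 y5 = 0"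
    "qeval Q' x1 y1 = 0" "qeval Q' x2 y2 = 0" "qeval Q' x3 y3 = 0" "qeval Q' x5 y5 = 0"
    and nzw: "JJ P' Q' x1 y1 \<noteq> 0" "JJ P' Q' x2 y2 \<noteq> 0" "JJ P' Q' x3 y3 \<noteq> 0" "JJ P' Q' x5 y5 \<noteq> 0"
    using assms(4) unfolding defs by auto
  have dv: "(x1,y1) \<noteq> (x2,y2)" "(x1,y1) \<noteq> (x3,y3)" "(x1,y1) \<noteq> (x4,y4)"
    "(x2,y2) \<noteq> (x3,y3)" "(x2,y2) \<noteq> (x4,y4)" "(x3,y3) \<noteq> (x4,y4)"
    using assms(1) unfolding p1 p2 p3 p4 by auto
  have dw: "(x1,y1) \<noteq> (x2,y2)" "(x1,y1) \<noteq> (x3,y3)" "(x1,y1) \<noteq> (x5,y5)"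
    "(x2,y2) \<noteq> (x3,y3)" "(x2,y2) \<noteq> (x5,y5)" "(x3,y3) \<noteq> (x5,y5)"
    using assms(3) unfolding p1 p2 p3 q4 by auto
  have eqJ: "JJ P' Q' x1 y1 = JJ P Q x1 y1" "JJ P' Q' x2 y2 = JJ P Q x2 y2" "JJ P' Q' x3 y3 = JJ P Q x3 y3"
    using assms(5) unfolding defs by auto
  have eqT: "qdx P' x1 y1 + qdy Q' x1 y1 = qdx P x1 y1 + qdy Q x1 y1"
    "qdx P' x2 y2 + qdy Q' x2 y2 = qdx P x2 y2 + qdy Q x2 y2"
    "qdx P' x3 y3 + qdy Q' x3 y3 = qdx P x3 y3 + qdy Q x3 y3"
    using assms(5) unfolding tr_Dv v w p1 p2 p3 by auto
  note Ev = EJ4[OF zv dv nzv]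
  note Ew = EJ4[OF zw dw nzw, unfolded eqJ]
  have A: "1/JJ P' Q' x5 y5 = 1/JJ P Q x4 y4"
    using Ev[of 1 0 0] Ew[of 1 0 0] by simp
  then have dd: "JJ P' Q' x5 y5 = JJ P Q x4 y4" by simp
  have "x5/JJ P' Q' x5 y5 = x4/JJ P Q x4 y4"
    using Ev[of 0 1 0] Ew[of 0 1 0] by simp
  then have xx: "x5 = x4" using dd nzv(4) by (simp add: divide_cancel_right)
  have "y5/JJ P' Q' x5 y5 = y4/JJ P Q x4 y4"
    using Ev[of 0 0 1] Ew[of 0 0 1] by simp
  then have yy: "y5 = y4" using dd nzv(4) by (simp add: divide_cancel_right)
  have Tv: "(qdx P x4 y4 + qdy Q x4 y4)/JJ P Q x4 y4 = -((qdx P x1 y1 + qdy Q x1 y1)/JJ P Q x1 y1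
     + (qdx P x2 y2 + qdy Q x2 y2)/JJ P Q x2 y2 + (qdx P x3 y3 + qdy Q x3 y3)/JJ P Q x3 y3)"
    unfolding tr_aff[of P _ _ Q] by (rule Ev)
  have Tw: "(qdx P' x5 y5 + qdy Q' x5 y5)/JJ P' Q' x5 y5 = -((qdx P' x1 y1 + qdy Q' x1 y1)/JJ P Q x1 y1
     + (qdx P' x2 y2 + qdy Q' x2 y2)/JJ P Q x2 y2 + (qdx P' x3 y3 + qdy Q' x3 y3)/JJ P Q x3 y3)"
    unfolding tr_aff[of P' _ _ Q'] by (rule Ew)
  have "(qdx P' x5 y5 + qdy Q' x5 y5)/JJ P Q x4 y4 = (qdx P x4 y4 + qdy Q x4 y4)/JJ P Q x4 y4"
    using Tv Tw eqT dd by simp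
  then have tt: "qdx P' x5 y5 + qdy Q' x5 y5 = qdx P x4 y4 + qdy Q x4 y4"
    using nzv(4) by (simp add: divide_cancel_right)
  show ?thesis unfolding defs tr_Dv using xx yy tt dd by simp
qed

end
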